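(* Let $G$ be a connected graph of order $n$, let $\tau\geq 2$ be an integer, let $\alpha\in[\frac{1}{2},\frac{3}{4})$, and suppose $$n\geq\max\Big\{4\tau^2+5\tau+1,\ \frac{8\tau(1-\alpha)-2\alpha+1}{3-4\alpha}\Big\}.$$ If $\rho_{\alpha}(G)\geq\rho_{\alpha}\big(K_{\tau-1}\vee(K_{n-\tau}\cup K_{1})\big)$, then $G$ is $\tau$-tough, unless $G\cong K_{\tau-1}\vee(K_{n-\tau}\cup K_{1})$.
   Context: For a graph $G$, $A(G)$ is its adjacency matrix and $D(G)$ the diagonal matrix of vertex degrees. For $\alpha\in[0,1]$, $A_{\alpha}(G)=\alpha D(G)+(1-\alpha)A(G)$, and $\rho_{\alpha}(G)$ denotes the largest eigenvalue of $A_{\alpha}(G)$. $c(H)$ denotes the number of connected components of $H$. For a real $\tau>0$, a graph $G$ is $\tau$-tough if $|S|\geq\tau\,(c(G-S)-1)$ for every proper subset $S\subsetneq V(G)$ with $c(G-S)>1$ (a complete graph has no such $S$). $K_m$ is the complete graph on $m$ vertices, $\cup$ is disjoint union, and $G_1\vee G_2$ (join) is obtained from $G_1\cup G_2$ by adding all edges between $V(G_1)$ and $V(G_2)$. *)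

theory Defs
  imports "Jordan_Normal_Form.Matrix" "Jordan_Normal_Form.Char_Poly"
begin

definition graph :: "nat \<Rightarrow> (nat \<Rightarrow> nat \<Rightarrow> bool) \<Rightarrow> bool" where
  "graph n E \<longleftrightarrow> (\<forall>i j. E i j \<longrightarrow> i < n \<and> j < n) \<and> (\<forall>i j. E i j \<longleftrightarrow> E j i) \<and> (\<forall>i. \<not> E i i)"

definition degree :: "nat \<Rightarrow> (nat \<Rightarrow> nat \<Rightarrow> bool) \<Rightarrow> nat \<Rightarrow> nat" where
  "degree n E i = card {j. j < n \<and> E i j}"

definition adj_mat :: "nat \<Rightarrow> (nat \<Rightarrow> nat \<Rightarrow> bool) \<Rightarrow> real mat" where
  "adj_mat n E = mat n n (\<lambda>(i, j). if E i j then 1 else 0)"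

definition deg_mat :: "nat \<Rightarrow> (nat \<Rightarrow> nat \<Rightarrow> bool) \<Rightarrow> real mat" where
  "deg_mat n E = mat n n (\<lambda>(i, j). if i = j then real (degree n E i) else 0)"

definition A_alpha :: "real \<Rightarrow> nat \<Rightarrow> (nat \<Rightarrow> nat \<Rightarrow> bool) \<Rightarrow> real mat" where
  "A_alpha \<alpha> n E = \<alpha> \<cdot>\<^sub>m deg_mat n E + (1 - \<alpha>) \<cdot>\<^sub>m adj_mat n E"

definition largest_eigenvalue :: "real mat \<Rightarrow> real" where
  "largest_eigenvalue M = Max {\<mu>. eigenvalue M \<mu>}"

definition rho_alpha :: "real \<Rightarrow> nat \<Rightarrow> (nat \<Rightarrow> nat \<Rightarrow> bool) \<Rightarrow> real" where
  "rho_alpha \<alpha> n E = largest_eigenvalue (A_alpha \<alpha> n E)"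

definition components :: "(nat \<Rightarrow> nat \<Rightarrow> bool) \<Rightarrow> nat set \<Rightarrow> nat set set" where
  "components E S = (\<lambda>v. {w \<in> S. (\<lambda>x y. E x y \<and> x \<in> S \<and> y \<in> S)\<^sup>*\<^sup>* v w}) ` S"

definition num_components :: "(nat \<Rightarrow> nat \<Rightarrow> bool) \<Rightarrow> nat set \<Rightarrow> nat" where
  "num_components E S = card (components E S)"

definition connected_graph :: "nat \<Rightarrow> (nat \<Rightarrow> nat \<Rightarrow> bool) \<Rightarrow> bool" where
  "connected_graph n E \<longleftrightarrow> num_components E {0..<n} = 1"

definition tough :: "real \<Rightarrow> nat \<Rightarrow> (nat \<Rightarrow> nat \<Rightarrow> bool) \<Rightarrow> bool" where
  "tough \<tau> n E \<longleftrightarrow> (\<forall>S. S \<subset> {0..<n} \<and> num_components E ({0..<n} - S) > 1 \<longrightarrow>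
      real (card S) \<ge> \<tau> * (real (num_components E ({0..<n} - S)) - 1))"

definition graph_iso :: "nat \<Rightarrow> (nat \<Rightarrow> nat \<Rightarrow> bool) \<Rightarrow> (nat \<Rightarrow> nat \<Rightarrow> bool) \<Rightarrow> bool" where
  "graph_iso n E H \<longleftrightarrow> (\<exists>f. bij_betw f {0..<n} {0..<n} \<and>
      (\<forall>i<n. \<forall>j<n. E i j \<longleftrightarrow> H (f i) (f j)))"

text \<open>K_{t-1} join (K_{n-t} union K_1) on {0..<n}: vertices 0..t-2 form K_{t-1},
  vertices t-1..n-2 form K_{n-t}, vertex n-1 is the K_1.\<close>
definition extremal_graph :: "nat \<Rightarrow> nat \<Rightarrow> nat \<Rightarrow> nat \<Rightarrow> bool" where
  "extremal_graph t n i j \<longleftrightarrow> i < n \<and> j < n \<and> i \<noteq> j \<and>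
      (i < t - 1 \<or> j < t - 1 \<or> (i < n - 1 \<and> j < n - 1))"

end

theory Submission
  imports Defs "Jordan_Normal_Form.Spectral_Radius"
begin

lemma eig_sum_iff:
  fixes A :: "'a::comm_ring_1 mat"
  assumes A: "A \<in> carrier_mat n n"
  shows "eigenvalue A \<mu> \<longleftrightarrow> (\<exists>f. (\<exists>i<n. f i \<noteq> 0) \<and> (\<forall>i<n. (\<Sum>j\<in>{0..<n}. A $$ (i,j) * f j) = \<mu> * f i))"
proof
  assume "eigenvalue A \<mu>"
  then obtain v where v: "v \<in> carrier_vec n" "v \<noteq> 0\<^sub>v n" "A *\<^sub>v v = \<mu> \<cdot>\<^sub>v v"
    using A unfolding eigenvalue_def eigenvector_def by auto
  have "\<exists>i<n. v $ i \<noteq> 0"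
  proof (rule ccontr)
    assume "\<not> ?thesis"
    hence "v = 0\<^sub>v n" using v(1) by (intro eq_vecI) auto
    thus False using v(2) by simp
  qed
  moreover have "\<forall>i<n. (\<Sum>j\<in>{0..<n}. A $$ (i,j) * v $ j) = \<mu> * v $ i"
  proof (intro allI impI)
    fix i assume i: "i < n"
    have "(A *\<^sub>v v) $ i = \<mu> * v $ i" using v(3) v(1) i by simp
    moreover have "(A *\<^sub>v v) $ i = (\<Sum>j\<in>{0..<n}. A $$ (i,j) * v $ j)"
      using A v(1) i by (simp add: scalar_prod_def)
    ultimately show "(\<Sum>j\<in>{0..<n}. A $$ (i,j) * v $ j) = \<mu> * v $ i" by simp
  qed
  ultimately show "\<exists>f. (\<exists>i<n. f i \<noteq> 0) \<and> (\<forall>i<n. (\<Sum>j\<in>{0..<n}. A $$ (i,j) * f j) = \<mu> * f i)"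
    by blast
next
  assume "\<exists>f. (\<exists>i<n. f i \<noteq> 0) \<and> (\<forall>i<n. (\<Sum>j\<in>{0..<n}. A $$ (i,j) * f j) = \<mu> * f i)"
  then obtain f where f: "\<exists>i<n. f i \<noteq> 0" "\<forall>i<n. (\<Sum>j\<in>{0..<n}. A $$ (i,j) * f j) = \<mu> * f i"
    by blast
  define v where "v = vec n f"
  have vc: "v \<in> carrier_vec n" unfolding v_def by simp
  have "v \<noteq> 0\<^sub>v n" using f(1) unfolding v_def by (auto simp: vec_eq_iff)
  moreover have "A *\<^sub>v v = \<mu> \<cdot>\<^sub>v v"
  proof (rule eq_vecI)
    fix i assume "i < dim_vec (\<mu> \<cdot>\<^sub>v v)"
    hence i: "i < n" unfolding v_def by simp
    have "(A *\<^sub>v v) $ i = (\<Sum>j\<in>{0..<n}. A $$ (i,j) * f j)"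
      using A i unfolding v_def by (simp add: scalar_prod_def)
    thus "(A *\<^sub>v v) $ i = (\<mu> \<cdot>\<^sub>v v) $ i" using f(2) i unfolding v_def by simp
  qed (use A in \<open>simp add: v_def\<close>)
  ultimately show "eigenvalue A \<mu>" unfolding eigenvalue_def eigenvector_def
    using A vc by auto
qed

lemma real_sym_eigenvalue_exists:
  fixes A :: "real mat"
  assumes A: "A \<in> carrier_mat n n" and n: "n > 0"
    and sym: "\<And>i j. i < n \<Longrightarrow> j < n \<Longrightarrow> A $$ (i,j) = A $$ (j,i)"
  shows "\<exists>\<mu>. eigenvalue A \<mu>"
proof -
  define AC where "AC = map_mat complex_of_real A"
  have AC: "AC \<in> carrier_mat n n" using A unfolding AC_def by simp
  from spectrum_non_empty[OF AC n] obtain z where "eigenvalue AC z"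
    unfolding spectrum_def by auto
  then obtain w where w: "\<exists>i<n. w i \<noteq> 0" and ew: "\<forall>i<n. (\<Sum>j\<in>{0..<n}. AC $$ (i,j) * w j) = z * w i"
    unfolding eig_sum_iff[OF AC] by blast
  define a where "a i j = A $$ (i,j)" for i j
  have ew2: "(\<Sum>j\<in>{0..<n}. of_real (a i j) * w j) = z * w i" if "i < n" for i
    using ew that A unfolding AC_def a_def by auto
  define Q where "Q = (\<Sum>i\<in>{0..<n}. cnj (w i) * (\<Sum>j\<in>{0..<n}. of_real (a i j) * w j))"
  define r where "r = (\<Sum>i\<in>{0..<n}. (cmod (w i))^2)"
  have Qz: "Q = z * of_real r"
  proof -
    have "Q = (\<Sum>i\<in>{0..<n}. cnj (w i) * (z * w i))"
      unfolding Q_def by (rule sum.cong) (auto simp: ew2)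
    also have "\<dots> = z * (\<Sum>i\<in>{0..<n}. cnj (w i) * w i)"
      by (simp add: sum_distrib_left mult_ac)
    also have "(\<Sum>i\<in>{0..<n}. cnj (w i) * w i) = of_real r"
      unfolding r_def of_real_sum
    proof (rule sum.cong)
      fix x show "cnj (w x) * w x = complex_of_real ((cmod (w x))^2)"
        by (metis complex_norm_square mult.commute)
    qed simp
    finally show ?thesis .
  qed
  have "cnj Q = Q"
  proof -
    have "cnj Q = (\<Sum>i\<in>{0..<n}. \<Sum>j\<in>{0..<n}. w i * of_real (a i j) * cnj (w j))"
      unfolding Q_def by (simp add: sum_distrib_left mult_ac)
    also have "\<dots> = (\<Sum>j\<in>{0..<n}. \<Sum>i\<in>{0..<n}. w i * of_real (a i j) * cnj (w j))"
      by (rule sum.swap)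
    also have "\<dots> = (\<Sum>j\<in>{0..<n}. \<Sum>i\<in>{0..<n}. cnj (w j) * (of_real (a j i) * w i))"
      by (intro sum.cong refl) (auto simp: a_def sym mult_ac)
    also have "\<dots> = Q" unfolding Q_def by (simp add: sum_distrib_left)
    finally show ?thesis .
  qed
  hence "Im (cnj Q) = Im Q" by simp
  hence "Im Q = 0" by simp
  have "r > 0"
  proof -
    obtain i where i: "i < n" "w i \<noteq> 0" using w by blast
    have "(cmod (w i))^2 \<le> r" unfolding r_def
      by (rule member_le_sum) (use i in auto)
    moreover have "(cmod (w i))^2 > 0" using i by simp
    ultimately show ?thesis by linarith
  qed
  have "Im Q = Im z * r" unfolding Qz by simp
  hence "Im z = 0" using \<open>Im Q = 0\<close> \<open>r > 0\<close> by simp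
  hence zr: "z = of_real (Re z)" by (simp add: complex_eq_iff)
  have eRe: "(\<Sum>j\<in>{0..<n}. A $$ (i,j) * Re (w j)) = Re z * Re (w i)" if i: "i < n" for i
  proof -
    have "Re (\<Sum>j\<in>{0..<n}. of_real (a i j) * w j) = Re (z * w i)" using ew2[OF i] by simp
    thus ?thesis using \<open>Im z = 0\<close> unfolding a_def by (simp add: Re_sum)
  qed
  have eIm: "(\<Sum>j\<in>{0..<n}. A $$ (i,j) * Im (w j)) = Re z * Im (w i)" if i: "i < n" for i
  proof -
    have "Im (\<Sum>j\<in>{0..<n}. of_real (a i j) * w j) = Im (z * w i)" using ew2[OF i] by simp
    thus ?thesis using \<open>Im z = 0\<close> unfolding a_def by (simp add: Im_sum)
  qed
  obtain i where i: "i < n" "w i \<noteq> 0" using w by blast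
  show ?thesis
  proof (cases "Re (w i) = 0")
    case True
    have "Im (w i) \<noteq> 0"
    proof
      assume "Im (w i) = 0"
      hence "w i = 0" using True by (simp add: complex_eq_iff)
      thus False using i(2) by simp
    qed
    hence "eigenvalue A (Re z)" unfolding eig_sum_iff[OF A]
      using eIm i(1) by (intro exI[of _ "\<lambda>j. Im (w j)"]) auto
    thus ?thesis by blast
  next
    case False
    hence "eigenvalue A (Re z)" unfolding eig_sum_iff[OF A]
      using eRe i(1) by (intro exI[of _ "\<lambda>j. Re (w j)"]) auto
    thus ?thesis by blast
  qed
qed

lemma perron_core:
  fixes M :: "nat \<Rightarrow> nat \<Rightarrow> real" and x v :: "nat \<Rightarrow> real"
  assumes sym: "\<And>i j. i < n \<Longrightarrow> j < n \<Longrightarrow> M i j = M j i"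
    and nonneg: "\<And>i j. i < n \<Longrightarrow> j < n \<Longrightarrow> M i j \<ge> 0"
    and xpos: "\<And>i. i < n \<Longrightarrow> x i > 0"
    and sub: "\<And>i. i < n \<Longrightarrow> (\<Sum>j\<in>{0..<n}. M i j * x j) \<le> lam * x i"
    and eig: "\<And>i. i < n \<Longrightarrow> (\<Sum>j\<in>{0..<n}. M i j * v j) = \<mu> * v i"
    and nz: "\<exists>i<n. v i \<noteq> 0"
  shows "\<mu> \<le> lam"
    and "\<mu> = lam \<Longrightarrow> (\<forall>i<n. (\<Sum>j\<in>{0..<n}. M i j * x j) = lam * x i \<or> v i = 0)
          \<and> (\<forall>i<n. (\<Sum>j\<in>{0..<n}. M i j * \<bar>v j\<bar>) = lam * \<bar>v i\<bar>)"
proof -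
  define P where "P = (\<Sum>i\<in>{0..<n}. x i * \<bar>v i\<bar>)"
  have Ppos: "P > 0"
  proof -
    obtain k where k: "k < n" "v k \<noteq> 0" using nz by blast
    have "x k * \<bar>v k\<bar> \<le> P" unfolding P_def
      by (rule member_le_sum) (use k in \<open>auto intro!: mult_nonneg_nonneg less_imp_le[OF xpos]\<close>)
    moreover have "x k * \<bar>v k\<bar> > 0" using k xpos by simp
    ultimately show ?thesis by linarith
  qed
  define a where "a i = (\<Sum>j\<in>{0..<n}. M i j * \<bar>v j\<bar>) - \<bar>\<mu>\<bar> * \<bar>v i\<bar>" for i
  define b where "b j = \<bar>v j\<bar> * (lam * x j - (\<Sum>i\<in>{0..<n}. M j i * x i))" for j
  have a_nn: "a i \<ge> 0" if i: "i < n" for i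
  proof -
    have "\<bar>\<mu>\<bar> * \<bar>v i\<bar> = \<bar>\<Sum>j\<in>{0..<n}. M i j * v j\<bar>" using eig[OF i] by (simp add: abs_mult)
    also have "\<dots> \<le> (\<Sum>j\<in>{0..<n}. \<bar>M i j * v j\<bar>)" by (rule sum_abs)
    also have "\<dots> = (\<Sum>j\<in>{0..<n}. M i j * \<bar>v j\<bar>)"
      by (rule sum.cong) (use nonneg i in \<open>auto simp: abs_mult\<close>)
    finally show ?thesis unfolding a_def by simp
  qed
  have b_nn: "b j \<ge> 0" if j: "j < n" for j
    unfolding b_def using sub[OF j] by simp
  have key: "(\<Sum>i\<in>{0..<n}. x i * a i) + (\<Sum>j\<in>{0..<n}. b j) = (lam - \<bar>\<mu>\<bar>) * P"
  proof -
    have swap: "(\<Sum>i\<in>{0..<n}. x i * (\<Sum>j\<in>{0..<n}. M i j * \<bar>v j\<bar>))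
        = (\<Sum>j\<in>{0..<n}. \<bar>v j\<bar> * (\<Sum>i\<in>{0..<n}. M j i * x i))"
    proof -
      have "(\<Sum>i\<in>{0..<n}. x i * (\<Sum>j\<in>{0..<n}. M i j * \<bar>v j\<bar>))
          = (\<Sum>i\<in>{0..<n}. \<Sum>j\<in>{0..<n}. x i * M i j * \<bar>v j\<bar>)"
        by (simp add: sum_distrib_left mult_ac)
      also have "\<dots> = (\<Sum>j\<in>{0..<n}. \<Sum>i\<in>{0..<n}. x i * M i j * \<bar>v j\<bar>)"
        by (rule sum.swap)
      also have "\<dots> = (\<Sum>j\<in>{0..<n}. \<Sum>i\<in>{0..<n}. \<bar>v j\<bar> * (M j i * x i))"
        by (intro sum.cong refl) (auto simp: sym mult_ac)
      also have "\<dots> = (\<Sum>j\<in>{0..<n}. \<bar>v j\<bar> * (\<Sum>i\<in>{0..<n}. M j i * x i))"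
        by (simp add: sum_distrib_left)
      finally show ?thesis .
    qed
    have "(\<Sum>i\<in>{0..<n}. x i * a i) = (\<Sum>i\<in>{0..<n}. x i * (\<Sum>j\<in>{0..<n}. M i j * \<bar>v j\<bar>)) - \<bar>\<mu>\<bar> * P"
      unfolding a_def P_def by (simp add: right_diff_distrib sum_subtractf sum_distrib_left mult_ac)
    moreover have "(\<Sum>j\<in>{0..<n}. b j) = lam * P - (\<Sum>j\<in>{0..<n}. \<bar>v j\<bar> * (\<Sum>i\<in>{0..<n}. M j i * x i))"
      unfolding b_def P_def by (simp add: right_diff_distrib sum_subtractf sum_distrib_left mult_ac)
    ultimately show ?thesis using swap by (simp add: algebra_simps)
  qed
  have S1: "(\<Sum>i\<in>{0..<n}. x i * a i) \<ge> 0"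
    by (rule sum_nonneg) (use xpos a_nn in \<open>auto intro: mult_nonneg_nonneg less_imp_le\<close>)
  have S2: "(\<Sum>j\<in>{0..<n}. b j) \<ge> 0" by (rule sum_nonneg) (use b_nn in auto)
  have "(lam - \<bar>\<mu>\<bar>) * P \<ge> 0" using key S1 S2 by linarith
  hence "lam - \<bar>\<mu>\<bar> \<ge> 0" using Ppos by (simp add: zero_le_mult_iff)
  thus "\<mu> \<le> lam" by linarith
  assume eq: "\<mu> = lam"
  hence "\<bar>\<mu>\<bar> = lam" using \<open>lam - \<bar>\<mu>\<bar> \<ge> 0\<close> by linarith
  hence z: "(\<Sum>i\<in>{0..<n}. x i * a i) + (\<Sum>j\<in>{0..<n}. b j) = 0" using key by simp
  hence z1: "(\<Sum>i\<in>{0..<n}. x i * a i) = 0" and z2: "(\<Sum>j\<in>{0..<n}. b j) = 0"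
    using S1 S2 by linarith+
  have ai: "a i = 0" if i: "i < n" for i
  proof -
    have "\<forall>i\<in>{0..<n}. x i * a i = 0"
      using z1 by (subst sum_nonneg_eq_0_iff[symmetric]) (use xpos a_nn in \<open>auto intro: mult_nonneg_nonneg less_imp_le\<close>)
    hence "x i * a i = 0" using i by auto
    thus ?thesis using xpos[OF i] by simp
  qed
  have bj: "b j = 0" if j: "j < n" for j
  proof -
    have "\<forall>j\<in>{0..<n}. b j = 0"
      using z2 by (subst sum_nonneg_eq_0_iff[symmetric]) (use b_nn in auto)
    thus ?thesis using j by auto
  qed
  show "(\<forall>i<n. (\<Sum>j\<in>{0..<n}. M i j * x j) = lam * x i \<or> v i = 0)
          \<and> (\<forall>i<n. (\<Sum>j\<in>{0..<n}. M i j * \<bar>v j\<bar>) = lam * \<bar>v i\<bar>)"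
  proof (intro conjI allI impI)
    fix i assume i: "i < n"
    show "(\<Sum>j\<in>{0..<n}. M i j * x j) = lam * x i \<or> v i = 0"
      using bj[OF i] unfolding b_def by auto
    show "(\<Sum>j\<in>{0..<n}. M i j * \<bar>v j\<bar>) = lam * \<bar>v i\<bar>"
      using ai[OF i] \<open>\<bar>\<mu>\<bar> = lam\<close> unfolding a_def by simp
  qed
qed

definition Mf :: "real \<Rightarrow> nat \<Rightarrow> (nat \<Rightarrow> nat \<Rightarrow> bool) \<Rightarrow> nat \<Rightarrow> nat \<Rightarrow> real" where
  "Mf \<alpha> n E i j = (if i = j then \<alpha> * real (degree n E i) else 0) + (1 - \<alpha>) * (if E i j then 1 else 0)"

definition nbr :: "nat \<Rightarrow> (nat \<Rightarrow> nat \<Rightarrow> bool) \<Rightarrow> nat \<Rightarrow> nat set" where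
  "nbr n E u = {j. j < n \<and> E u j}"

lemma degree_nbr: "degree n E u = card (nbr n E u)"
  unfolding degree_def nbr_def by simp

lemma nbr_sub: "nbr n E u \<subseteq> {0..<n}" unfolding nbr_def by auto

lemma A_alpha_carrier: "A_alpha \<alpha> n E \<in> carrier_mat n n"
  unfolding A_alpha_def deg_mat_def adj_mat_def by simp

lemma A_alpha_entry: "i < n \<Longrightarrow> j < n \<Longrightarrow> A_alpha \<alpha> n E $$ (i,j) = Mf \<alpha> n E i j"
  unfolding A_alpha_def deg_mat_def adj_mat_def Mf_def by simp

lemma eig_Mf_iff: "eigenvalue (A_alpha \<alpha> n E) \<mu> \<longleftrightarrow>
   (\<exists>f. (\<exists>i<n. f i \<noteq> 0) \<and> (\<forall>i<n. (\<Sum>j\<in>{0..<n}. Mf \<alpha> n E i j * f j) = \<mu> * f i))"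
proof -
  have "(\<forall>i<n. (\<Sum>j\<in>{0..<n}. A_alpha \<alpha> n E $$ (i,j) * f j) = \<mu> * f i) \<longleftrightarrow>
        (\<forall>i<n. (\<Sum>j\<in>{0..<n}. Mf \<alpha> n E i j * f j) = \<mu> * f i)" for f
    by (auto simp: A_alpha_entry)
  thus ?thesis unfolding eig_sum_iff[OF A_alpha_carrier] by simp
qed

lemma Mf_sym: "graph n E \<Longrightarrow> Mf \<alpha> n E i j = Mf \<alpha> n E j i"
  unfolding Mf_def graph_def by auto

lemma Mf_nonneg: "0 \<le> \<alpha> \<Longrightarrow> \<alpha> \<le> 1 \<Longrightarrow> Mf \<alpha> n E i j \<ge> 0"
  unfolding Mf_def by auto

lemma row_formula:
  assumes "graph n E" "u < n"
  shows "(\<Sum>j\<in>{0..<n}. Mf \<alpha> n E u j * x j) =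
     \<alpha> * real (degree n E u) * x u + (1 - \<alpha>) * (\<Sum>j\<in>nbr n E u. x j)"
proof -
  have "(\<Sum>j\<in>{0..<n}. Mf \<alpha> n E u j * x j) =
     (\<Sum>j\<in>{0..<n}. (if u = j then \<alpha> * real (degree n E u) * x j else 0)) +
     (\<Sum>j\<in>{0..<n}. (1 - \<alpha>) * (if E u j then x j else 0))"
    unfolding Mf_def sum.distrib[symmetric] by (rule sum.cong) (auto simp: algebra_simps)
  also have "(\<Sum>j\<in>{0..<n}. (if u = j then \<alpha> * real (degree n E u) * x j else 0)) = \<alpha> * real (degree n E u) * x u"
    using assms(2) by (simp add: sum.delta)
  also have "(\<Sum>j\<in>{0..<n}. (1 - \<alpha>) * (if E u j then x j else 0)) = (1 - \<alpha>) * (\<Sum>j\<in>nbr n E u. x j)"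
  proof -
    have "(\<Sum>j\<in>{0..<n}. (if E u j then x j else 0)) = (\<Sum>j\<in>{j \<in> {0..<n}. E u j}. x j)"
      by (rule sum.inter_filter[symmetric]) simp
    also have "{j \<in> {0..<n}. E u j} = nbr n E u" unfolding nbr_def by auto
    finally have X: "(\<Sum>j\<in>{0..<n}. (if E u j then x j else 0)) = (\<Sum>j\<in>nbr n E u. x j)" .
    have "(\<Sum>j\<in>{0..<n}. (1 - \<alpha>) * (if E u j then x j else 0)) = (1 - \<alpha>) * (\<Sum>j\<in>{0..<n}. (if E u j then x j else 0))"
      by (simp only: sum_distrib_left)
    thus ?thesis using X by simp
  qed
  finally show ?thesis .
qed

lemma row_bound:
  assumes g: "graph n E" and u: "u < n" and NK: "nbr n E u \<subseteq> K" and K: "K \<subseteq> {0..<n}"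
    and a: "0 \<le> \<alpha>" "\<alpha> \<le> 1" and xnn: "\<And>j. j < n \<Longrightarrow> x j \<ge> 0"
  shows "(\<Sum>j\<in>{0..<n}. Mf \<alpha> n E u j * x j) \<le> \<alpha> * real (card K) * x u + (1 - \<alpha>) * (\<Sum>j\<in>K. x j)"
proof -
  have fK: "finite K" using K finite_subset by blast
  have "card (nbr n E u) \<le> card K" using NK fK by (rule card_mono[rotated])
  hence "\<alpha> * real (degree n E u) * x u \<le> \<alpha> * real (card K) * x u"
    unfolding degree_nbr using a xnn[OF u] by (intro mult_right_mono mult_left_mono) auto
  moreover have "(\<Sum>j\<in>nbr n E u. x j) \<le> (\<Sum>j\<in>K. x j)"
    by (rule sum_mono2[OF fK NK]) (use K xnn in auto)
  hence "(1 - \<alpha>) * (\<Sum>j\<in>nbr n E u. x j) \<le> (1 - \<alpha>) * (\<Sum>j\<in>K. x j)"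
    using a by (intro mult_left_mono) auto
  ultimately show ?thesis unfolding row_formula[OF g u] by linarith
qed

lemma row_strict:
  assumes g: "graph n E" and u: "u < n" and NK: "nbr n E u \<subseteq> K" and K: "K \<subseteq> {0..<n}"
    and a: "0 \<le> \<alpha>" "\<alpha> < 1" and xnn: "\<And>j. j < n \<Longrightarrow> x j > 0"
    and b: "b \<in> K" "b \<notin> nbr n E u"
  shows "(\<Sum>j\<in>{0..<n}. Mf \<alpha> n E u j * x j) < \<alpha> * real (card K) * x u + (1 - \<alpha>) * (\<Sum>j\<in>K. x j)"
proof -
  have fK: "finite K" using K finite_subset by blast
  have "card (nbr n E u) \<le> card K" using NK fK by (rule card_mono[rotated])
  hence D: "\<alpha> * real (degree n E u) * x u \<le> \<alpha> * real (card K) * x u"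
    unfolding degree_nbr using a xnn[OF u] by (intro mult_right_mono mult_left_mono) auto
  have "(\<Sum>j\<in>nbr n E u. x j) \<le> (\<Sum>j\<in>K - {b}. x j)"
  proof (rule sum_mono2)
    show "finite (K - {b})" using fK by simp
    show "nbr n E u \<subseteq> K - {b}" using NK b by auto
    fix j assume "j \<in> K - {b} - nbr n E u"
    hence "j < n" using K by auto
    thus "0 \<le> x j" using xnn[of j] by simp
  qed
  moreover have "(\<Sum>j\<in>K. x j) = x b + (\<Sum>j\<in>K - {b}. x j)"
    using fK b(1) by (simp add: sum.remove)
  moreover have "x b > 0" using b K xnn by auto
  ultimately have "(\<Sum>j\<in>nbr n E u. x j) < (\<Sum>j\<in>K. x j)" by linarith
  hence "(1 - \<alpha>) * (\<Sum>j\<in>nbr n E u. x j) < (1 - \<alpha>) * (\<Sum>j\<in>K. x j)"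
    using a by (intro mult_strict_left_mono) auto
  with D show ?thesis unfolding row_formula[OF g u] by linarith
qed

lemma row_eq:
  assumes g: "graph n E" and u: "u < n" and NK: "nbr n E u = K"
  shows "(\<Sum>j\<in>{0..<n}. Mf \<alpha> n E u j * x j) = \<alpha> * real (card K) * x u + (1 - \<alpha>) * (\<Sum>j\<in>K. x j)"
  unfolding row_formula[OF g u] degree_nbr NK ..

lemma connected_reach:
  assumes "connected_graph n E" "i < n" "j < n"
  shows "(\<lambda>x y. E x y \<and> x \<in> {0..<n} \<and> y \<in> {0..<n})\<^sup>*\<^sup>* i j"
proof -
  have c1: "card (components E {0..<n}) = 1" using assms(1)
    unfolding connected_graph_def num_components_def .
  obtain C where C: "components E {0..<n} = {C}"
    using card_1_singletonE[OF c1] by blast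
  have ci: "{w \<in> {0..<n}. (\<lambda>x y. E x y \<and> x \<in> {0..<n} \<and> y \<in> {0..<n})\<^sup>*\<^sup>* i w} \<in> components E {0..<n}"
    unfolding components_def using assms(2) by (intro imageI) simp
  have cj: "{w \<in> {0..<n}. (\<lambda>x y. E x y \<and> x \<in> {0..<n} \<and> y \<in> {0..<n})\<^sup>*\<^sup>* j w} \<in> components E {0..<n}"
    unfolding components_def using assms(3) by (intro imageI) simp
  have jm: "j \<in> {w \<in> {0..<n}. (\<lambda>x y. E x y \<and> x \<in> {0..<n} \<and> y \<in> {0..<n})\<^sup>*\<^sup>* j w}"
    using assms(3) by simp
  have e1: "{w \<in> {0..<n}. (\<lambda>x y. E x y \<and> x \<in> {0..<n} \<and> y \<in> {0..<n})\<^sup>*\<^sup>* i w} = C"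
    using ci unfolding C by simp
  have e2: "{w \<in> {0..<n}. (\<lambda>x y. E x y \<and> x \<in> {0..<n} \<and> y \<in> {0..<n})\<^sup>*\<^sup>* j w} = C"
    using cj unfolding C by simp
  have "j \<in> C" using jm unfolding e2 .
  hence "j \<in> {w \<in> {0..<n}. (\<lambda>x y. E x y \<and> x \<in> {0..<n} \<and> y \<in> {0..<n})\<^sup>*\<^sup>* i w}"
    unfolding e1 .
  thus ?thesis by simp
qed

lemma eig_set_props:
  assumes g: "graph n E" and n: "n > 0"
  shows "finite {\<mu>. eigenvalue (A_alpha \<alpha> n E) \<mu>}" "{\<mu>. eigenvalue (A_alpha \<alpha> n E) \<mu>} \<noteq> {}"
proof -
  show "finite {\<mu>. eigenvalue (A_alpha \<alpha> n E) \<mu>}"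
    using card_finite_spectrum(1)[OF A_alpha_carrier] unfolding spectrum_def by simp
  have "\<exists>\<mu>. eigenvalue (A_alpha \<alpha> n E) \<mu>"
    by (rule real_sym_eigenvalue_exists[OF A_alpha_carrier n])
       (simp add: A_alpha_entry, rule Mf_sym[OF g])
  thus "{\<mu>. eigenvalue (A_alpha \<alpha> n E) \<mu>} \<noteq> {}" by auto
qed

lemma rho_is_eig:
  assumes g: "graph n E" and n: "n > 0"
  shows "eigenvalue (A_alpha \<alpha> n E) (rho_alpha \<alpha> n E)"
  using Max_in[OF eig_set_props[OF g n]] unfolding rho_alpha_def largest_eigenvalue_def by simp

lemma rho_ge:
  assumes g: "graph n E" and n: "n > 0" and e: "eigenvalue (A_alpha \<alpha> n E) lam"
  shows "lam \<le> rho_alpha \<alpha> n E"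
  using Max_ge[OF eig_set_props(1)[OF g n]] e unfolding rho_alpha_def largest_eigenvalue_def by simp

lemma rho_le:
  assumes g: "graph n E" and n: "n > 0" and a: "0 \<le> \<alpha>" "\<alpha> \<le> 1"
    and xpos: "\<And>i. i < n \<Longrightarrow> x i > 0"
    and sub: "\<And>i. i < n \<Longrightarrow> (\<Sum>j\<in>{0..<n}. Mf \<alpha> n E i j * x j) \<le> lam * x i"
  shows "rho_alpha \<alpha> n E \<le> lam"
proof -
  obtain v where v: "\<exists>i<n. v i \<noteq> 0" "\<forall>i<n. (\<Sum>j\<in>{0..<n}. Mf \<alpha> n E i j * v j) = rho_alpha \<alpha> n E * v i"
    using rho_is_eig[OF g n, of \<alpha>] unfolding eig_Mf_iff by blast
  have sy: "\<And>i j. i < n \<Longrightarrow> j < n \<Longrightarrow> Mf \<alpha> n E i j = Mf \<alpha> n E j i" by (rule Mf_sym[OF g])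
  have nn: "\<And>i j. i < n \<Longrightarrow> j < n \<Longrightarrow> Mf \<alpha> n E i j \<ge> 0" by (rule Mf_nonneg[OF a])
  have ev: "\<And>i. i < n \<Longrightarrow> (\<Sum>j\<in>{0..<n}. Mf \<alpha> n E i j * v j) = rho_alpha \<alpha> n E * v i"
    using v(2) by blast
  show ?thesis by (rule perron_core(1)[OF sy nn xpos sub ev v(1)])
qed

lemma rho_less:
  assumes g: "graph n E" and c: "connected_graph n E" and n: "n > 0" and a: "0 \<le> \<alpha>" "\<alpha> < 1"
    and xpos: "\<And>i. i < n \<Longrightarrow> x i > 0"
    and sub: "\<And>i. i < n \<Longrightarrow> (\<Sum>j\<in>{0..<n}. Mf \<alpha> n E i j * x j) \<le> lam * x i"
    and k: "k < n" "(\<Sum>j\<in>{0..<n}. Mf \<alpha> n E k j * x j) < lam * x k"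
  shows "rho_alpha \<alpha> n E < lam"
proof -
  obtain v where v: "\<exists>i<n. v i \<noteq> 0" "\<forall>i<n. (\<Sum>j\<in>{0..<n}. Mf \<alpha> n E i j * v j) = rho_alpha \<alpha> n E * v i"
    using rho_is_eig[OF g n, of \<alpha>] unfolding eig_Mf_iff by blast
  have a1: "\<alpha> \<le> 1" using a by simp
  have sy: "\<And>i j. i < n \<Longrightarrow> j < n \<Longrightarrow> Mf \<alpha> n E i j = Mf \<alpha> n E j i" by (rule Mf_sym[OF g])
  have nn: "\<And>i j. i < n \<Longrightarrow> j < n \<Longrightarrow> Mf \<alpha> n E i j \<ge> 0" by (rule Mf_nonneg[OF a(1) a1])
  have ev: "\<And>i. i < n \<Longrightarrow> (\<Sum>j\<in>{0..<n}. Mf \<alpha> n E i j * v j) = rho_alpha \<alpha> n E * v i"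
    using v(2) by blast
  have le: "rho_alpha \<alpha> n E \<le> lam"
    by (rule perron_core(1)[OF sy nn xpos sub ev v(1)])
  show ?thesis
  proof (rule ccontr)
    assume "\<not> ?thesis"
    hence eq: "rho_alpha \<alpha> n E = lam" using le by simp
    have P: "(\<forall>i<n. (\<Sum>j\<in>{0..<n}. Mf \<alpha> n E i j * x j) = lam * x i \<or> v i = 0)
          \<and> (\<forall>i<n. (\<Sum>j\<in>{0..<n}. Mf \<alpha> n E i j * \<bar>v j\<bar>) = lam * \<bar>v i\<bar>)"
      by (rule perron_core(2)[OF sy nn xpos sub ev v(1) eq])
    have "(\<Sum>j\<in>{0..<n}. Mf \<alpha> n E k j * x j) = lam * x k \<or> v k = 0" using P k(1) by blast
    hence vk: "v k = 0" using k(2) by linarith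
    have propg: "v j = 0" if "v i = 0" "i < n" "j < n" "E i j" for i j
    proof -
      have "(\<Sum>j\<in>{0..<n}. Mf \<alpha> n E i j * \<bar>v j\<bar>) = 0" using P that by simp
      hence "\<forall>j\<in>{0..<n}. Mf \<alpha> n E i j * \<bar>v j\<bar> = 0"
        by (subst sum_nonneg_eq_0_iff[symmetric]) (use nn that(2) in \<open>auto intro!: mult_nonneg_nonneg\<close>)
      hence "Mf \<alpha> n E i j * \<bar>v j\<bar> = 0" using that by auto
      moreover have "i \<noteq> j" using that g unfolding graph_def by auto
      hence "Mf \<alpha> n E i j = 1 - \<alpha>" using that(4) unfolding Mf_def by simp
      hence "Mf \<alpha> n E i j > 0" using a by simp
      ultimately show ?thesis by simp
    qed
    have "v j = 0" if "j < n" for j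
    proof -
      have "(\<lambda>x y. E x y \<and> x \<in> {0..<n} \<and> y \<in> {0..<n})\<^sup>*\<^sup>* k j"
        using connected_reach[OF c k(1) that] .
      thus ?thesis
      proof (induction rule: rtranclp_induct)
        case base thus ?case using vk by simp
      next
        case (step y z) thus ?case using propg[of y z] by auto
      qed
    qed
    thus False using v(1) by auto
  qed
qed

definition Kset :: "nat \<Rightarrow> nat set \<Rightarrow> nat \<Rightarrow> nat \<Rightarrow> nat set" where
  "Kset n A w u = (if u \<in> A then {0..<n} - {u} else if u = w then A else {0..<n} - {u, w})"

definition xv :: "nat set \<Rightarrow> nat \<Rightarrow> real \<Rightarrow> real \<Rightarrow> nat \<Rightarrow> real" where
  "xv A w p q u = (if u \<in> A then 1 else if u = w then q else p)"

lemma Kset_sub: "A \<subseteq> {0..<n} \<Longrightarrow> Kset n A w u \<subseteq> {0..<n}"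
  unfolding Kset_def by auto

lemma sum_const_on: "(\<And>u. u \<in> X \<Longrightarrow> f u = c) \<Longrightarrow> (\<Sum>u\<in>X. f u) = real (card X) * c"
  by simp

lemma ext_sums:
  assumes A: "A \<subseteq> {0..<n}" and w: "w < n" "w \<notin> A" and cA: "card A = \<tau> - 1" and t: "\<tau> \<ge> 2"
    and nt: "n \<ge> \<tau> + 1"
  shows "(\<Sum>j\<in>{0..<n}. xv A w p q j) = (real \<tau> - 1) + (real n - real \<tau>) * p + q"
    and "u \<in> A \<Longrightarrow> (\<Sum>j\<in>{0..<n} - {u}. xv A w p q j) = (real \<tau> - 2) + (real n - real \<tau>) * p + q"
    and "u < n \<Longrightarrow> u \<notin> A \<Longrightarrow> u \<noteq> w \<Longrightarrow> (\<Sum>j\<in>{0..<n} - {u, w}. xv A w p q j) = (real \<tau> - 1) + (real n - real \<tau> - 1) * p"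
    and "(\<Sum>j\<in>A. xv A w p q j) = real \<tau> - 1"
    and "u \<in> A \<Longrightarrow> card ({0..<n} - {u}) = n - 1"
    and "u < n \<Longrightarrow> u \<noteq> w \<Longrightarrow> card ({0..<n} - {u, w}) = n - 2"
proof -
  have fA: "finite A" using A finite_subset by blast
  define B where "B = {0..<n} - A - {w}"
  have cB: "card B = n - \<tau>"
  proof -
    have "card ({0..<n} - A) = n - (\<tau> - 1)" using A cA fA by (simp add: card_Diff_subset)
    moreover have "w \<in> {0..<n} - A" using w by simp
    ultimately show ?thesis unfolding B_def using t by (simp add: card_Diff_singleton)
  qed
  have V: "{0..<n} = A \<union> ({w} \<union> B)" using A w unfolding B_def by auto
  have sA: "(\<Sum>j\<in>A. xv A w p q j) = real \<tau> - 1"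
    using cA t by (simp add: xv_def of_nat_diff)
  show "(\<Sum>j\<in>A. xv A w p q j) = real \<tau> - 1" by (rule sA)
  have sB: "(\<Sum>j\<in>B. xv A w p q j) = (real n - real \<tau>) * p"
  proof -
    have "(\<Sum>j\<in>B. xv A w p q j) = (\<Sum>j\<in>B. p)" by (rule sum.cong) (auto simp: B_def xv_def)
    thus ?thesis using cB nt by (simp add: of_nat_diff)
  qed
  have xw: "xv A w p q w = q" using w by (simp add: xv_def)
  have tot: "(\<Sum>j\<in>{0..<n}. xv A w p q j) = (real \<tau> - 1) + (real n - real \<tau>) * p + q"
  proof -
    have "(\<Sum>j\<in>{0..<n}. xv A w p q j) = (\<Sum>j\<in>A. xv A w p q j) + (\<Sum>j\<in>{w} \<union> B. xv A w p q j)"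
      unfolding V by (rule sum.union_disjoint) (use fA w in \<open>auto simp: B_def\<close>)
    also have "(\<Sum>j\<in>{w} \<union> B. xv A w p q j) = xv A w p q w + (\<Sum>j\<in>B. xv A w p q j)"
      using sum.insert[of B w "xv A w p q"] fA by (simp add: B_def)
    finally show ?thesis using sA sB xw by simp
  qed
  show "(\<Sum>j\<in>{0..<n}. xv A w p q j) = (real \<tau> - 1) + (real n - real \<tau>) * p + q" by (rule tot)
  show "u \<in> A \<Longrightarrow> (\<Sum>j\<in>{0..<n} - {u}. xv A w p q j) = (real \<tau> - 2) + (real n - real \<tau>) * p + q"
  proof -
    assume u: "u \<in> A"
    have "(\<Sum>j\<in>{0..<n}. xv A w p q j) = xv A w p q u + (\<Sum>j\<in>{0..<n} - {u}. xv A w p q j)"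
      using u A by (intro sum.remove) auto
    moreover have "xv A w p q u = 1" using u by (simp add: xv_def)
    ultimately show ?thesis using tot by linarith
  qed
  show "u < n \<Longrightarrow> u \<notin> A \<Longrightarrow> u \<noteq> w \<Longrightarrow> (\<Sum>j\<in>{0..<n} - {u, w}. xv A w p q j) = (real \<tau> - 1) + (real n - real \<tau> - 1) * p"
  proof -
    assume u: "u < n" "u \<notin> A" "u \<noteq> w"
    have "(\<Sum>j\<in>{0..<n}. xv A w p q j) = xv A w p q u + (\<Sum>j\<in>{0..<n} - {u}. xv A w p q j)"
      using u by (intro sum.remove) auto
    moreover have "(\<Sum>j\<in>{0..<n} - {u}. xv A w p q j) = xv A w p q w + (\<Sum>j\<in>{0..<n} - {u} - {w}. xv A w p q j)"
      using u w by (intro sum.remove) auto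
    moreover have "{0..<n} - {u} - {w} = {0..<n} - {u, w}" by auto
    moreover have "xv A w p q u = p" using u by (simp add: xv_def)
    ultimately show ?thesis using tot xw by (simp add: algebra_simps)
  qed
  show "u \<in> A \<Longrightarrow> card ({0..<n} - {u}) = n - 1" using A by auto
  show "u < n \<Longrightarrow> u \<noteq> w \<Longrightarrow> card ({0..<n} - {u, w}) = n - 2"
  proof -
    assume u: "u < n" "u \<noteq> w"
    have "card ({0..<n} - {u, w}) = card {0..<n} - card {u, w}"
      using u w by (intro card_Diff_subset) auto
    thus ?thesis using u by simp
  qed
qed

lemma ext_rows:
  assumes A: "A \<subseteq> {0..<n}" and w: "w < n" "w \<notin> A" and cA: "card A = \<tau> - 1" and t: "\<tau> \<ge> 2"
    and nt: "n \<ge> \<tau> + 1"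
    and e1: "\<alpha> * (real n - 1) + (1 - \<alpha>) * ((real \<tau> - 2) + (real n - real \<tau>) * p + q) = lam"
    and e2: "\<alpha> * (real n - 2) * p + (1 - \<alpha>) * ((real \<tau> - 1) + (real n - real \<tau> - 1) * p) = lam * p"
    and e3: "\<alpha> * (real \<tau> - 1) * q + (1 - \<alpha>) * (real \<tau> - 1) = lam * q"
    and u: "u < n"
  shows "\<alpha> * real (card (Kset n A w u)) * xv A w p q u + (1 - \<alpha>) * (\<Sum>j\<in>Kset n A w u. xv A w p q j)
         = lam * xv A w p q u"
proof -
  consider (a) "u \<in> A" | (w) "u = w" | (b) "u \<notin> A" "u \<noteq> w" by blast
  thus ?thesis
  proof cases
    case a
    have "card (Kset n A w u) = n - 1" using ext_sums(5)[OF A w cA t nt a] a by (simp add: Kset_def)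
    moreover have "(\<Sum>j\<in>Kset n A w u. xv A w p q j) = (real \<tau> - 2) + (real n - real \<tau>) * p + q"
      using ext_sums(2)[OF A w cA t nt a] a by (simp add: Kset_def)
    moreover have "real (n - 1) = real n - 1" using nt by (simp add: of_nat_diff)
    moreover have "xv A w p q u = 1" using a by (simp add: xv_def)
    ultimately show ?thesis using e1 by simp
  next
    case w
    have c0: "card (Kset n A w u) = \<tau> - 1" using w(1) assms(3) cA by (simp add: Kset_def)
    have c1: "real (card (Kset n A w u)) = real \<tau> - 1" using c0 t by (simp add: of_nat_diff)
    have s1: "(\<Sum>j\<in>Kset n A w u. xv A w p q j) = real \<tau> - 1"
      using ext_sums(4)[OF A assms(2,3) cA t nt] w assms(3) by (simp add: Kset_def)
    have xu: "xv A w p q u = q" using w assms(3) by (simp add: xv_def)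
    have "\<alpha> * real (card (Kset n A w u)) * xv A w p q u + (1 - \<alpha>) * (\<Sum>j\<in>Kset n A w u. xv A w p q j)
        = \<alpha> * (real \<tau> - 1) * q + (1 - \<alpha>) * (real \<tau> - 1)"
      by (simp only: c1 s1 xu)
    also have "\<dots> = lam * q" by (rule e3)
    finally show ?thesis using xu by simp
  next
    case b
    have c0: "card (Kset n A w u) = n - 2" using ext_sums(6)[OF A w cA t nt u b(2)] b by (simp add: Kset_def)
    have c1: "real (card (Kset n A w u)) = real n - 2" using c0 t nt by (simp add: of_nat_diff)
    have s1: "(\<Sum>j\<in>Kset n A w u. xv A w p q j) = (real \<tau> - 1) + (real n - real \<tau> - 1) * p"
      using ext_sums(3)[OF A w cA t nt u b] b by (simp add: Kset_def)
    have xu: "xv A w p q u = p" using b by (simp add: xv_def)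
    have "\<alpha> * real (card (Kset n A w u)) * xv A w p q u + (1 - \<alpha>) * (\<Sum>j\<in>Kset n A w u. xv A w p q j)
        = \<alpha> * (real n - 2) * p + (1 - \<alpha>) * ((real \<tau> - 1) + (real n - real \<tau> - 1) * p)"
      by (simp only: c1 s1 xu)
    also have "\<dots> = lam * p" by (rule e2)
    finally show ?thesis using xu by simp
  qed
qed

lemma root_exists:
  fixes N T \<alpha> :: real
  assumes T: "T \<ge> 2" and N: "N \<ge> T + 1" and a: "0 \<le> \<alpha>" "\<alpha> < 1"
  shows "\<exists>lam p q. lam > N - 2 \<and> p > 0 \<and> q > 0 \<and>
     \<alpha> * (N - 1) + (1 - \<alpha>) * ((T - 2) + (N - T) * p + q) = lam \<and>
     \<alpha> * (N - 2) * p + (1 - \<alpha>) * ((T - 1) + (N - T - 1) * p) = lam * p \<and>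
     \<alpha> * (T - 1) * q + (1 - \<alpha>) * (T - 1) = lam * q"
proof -
  define \<beta> where "\<beta> = 1 - \<alpha>"
  have b: "\<beta> > 0" "\<beta> \<le> 1" using a unfolding \<beta>_def by auto
  define D1 where "D1 l = l - \<alpha> * (N - 2) - \<beta> * (N - T - 1)" for l
  define D2 where "D2 l = l - \<alpha> * (T - 1)" for l
  define P where "P l = \<beta> * (T - 1) / D1 l" for l
  define Q where "Q l = \<beta> * (T - 1) / D2 l" for l
  define f where "f l = \<alpha> * (N - 1) + \<beta> * ((T - 2) + (N - T) * P l + Q l) - l" for l
  have D1pos: "D1 l \<ge> \<beta> * (T - 1)" if "l \<ge> N - 2" for l
  proof -
    have "D1 l - \<beta> * (T - 1) = l - (N - 2)" unfolding D1_def \<beta>_def by (simp add: algebra_simps)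
    thus ?thesis using that by linarith
  qed
  have bt: "\<beta> * (T - 1) > 0" using b T by simp
  have D2pos: "D2 l > 0" if "l \<ge> N - 2" for l
  proof -
    have "\<alpha> * (T - 1) < T - 1" using mult_strict_right_mono[of \<alpha> 1 "T - 1"] a T by simp
    thus ?thesis unfolding D2_def using that N by linarith
  qed
  have cont: "continuous_on {N - 2 .. N - 1} f"
    unfolding f_def P_def Q_def D1_def D2_def
    by (intro continuous_intros) (use D1pos bt D2pos in \<open>fastforce simp: D1_def D2_def\<close>)+
  have D1a: "D1 (N - 2) = \<beta> * (T - 1)" unfolding D1_def \<beta>_def by (simp add: algebra_simps)
  have btn: "\<beta> * (T - 1) \<noteq> 0" using bt by linarith
  have Pa: "P (N - 2) = 1" unfolding P_def D1a using btn by simp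
  have Qa: "Q (N - 2) > 0" unfolding Q_def using bt D2pos[of "N - 2"] by simp
  have fa: "f (N - 2) = \<alpha> + \<beta> * Q (N - 2)"
    unfolding f_def Pa \<beta>_def by (simp add: algebra_simps)
  have fa_pos: "f (N - 2) > 0" unfolding fa using a b Qa by (simp add: add_nonneg_pos)
  have D1b: "D1 (N - 1) = \<beta> * T + \<alpha>" unfolding D1_def \<beta>_def by (simp add: algebra_simps)
  have Pb: "P (N - 1) < 1"
  proof -
    have "\<beta> * (T - 1) < \<beta> * T + \<alpha>" using a b by (simp add: algebra_simps)
    moreover have "\<beta> * T + \<alpha> > 0" using a b T by (simp add: add_pos_nonneg)
    ultimately show ?thesis unfolding P_def D1b by simp
  qed
  have Qb: "Q (N - 1) < 1"
  proof -
    have "D2 (N - 1) > 0" using D2pos[of "N - 1"] by simp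
    moreover have "\<beta> * (T - 1) < D2 (N - 1)" unfolding D2_def \<beta>_def using N T by (simp add: algebra_simps)
    ultimately show ?thesis unfolding Q_def by simp
  qed
  have fb: "f (N - 1) < 0"
  proof -
    have "(N - T) * P (N - 1) < N - T" using mult_strict_left_mono[of "P (N - 1)" 1 "N - T"] Pb N by simp
    hence "(T - 2) + (N - T) * P (N - 1) + Q (N - 1) < N - 1" using Qb by linarith
    hence "\<beta> * ((T - 2) + (N - T) * P (N - 1) + Q (N - 1)) < \<beta> * (N - 1)" using b by simp
    thus ?thesis unfolding f_def \<beta>_def by (simp add: algebra_simps)
  qed
  obtain l where l: "N - 2 \<le> l" "l \<le> N - 1" "f l = 0"
    using IVT2'[of f "N - 1" 0 "N - 2"] fa_pos fb cont by force
  have lgt: "l > N - 2" using l fa_pos by (cases "l = N - 2") auto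
  have d1: "D1 l > 0" using D1pos[of l] l bt by simp
  have d2: "D2 l > 0" using D2pos[of l] l by simp
  have Ppos: "P l > 0" unfolding P_def using d1 bt by simp
  have Qpos: "Q l > 0" unfolding Q_def using d2 bt by simp
  have e1: "\<alpha> * (N - 1) + (1 - \<alpha>) * ((T - 2) + (N - T) * P l + Q l) = l"
    using l(3) unfolding f_def \<beta>_def by simp
  have e2: "\<alpha> * (N - 2) * P l + (1 - \<alpha>) * ((T - 1) + (N - T - 1) * P l) = l * P l"
  proof -
    have "P l * D1 l = \<beta> * (T - 1)" unfolding P_def using d1 by simp
    thus ?thesis unfolding D1_def \<beta>_def by (simp add: algebra_simps)
  qed
  have e3: "\<alpha> * (T - 1) * Q l + (1 - \<alpha>) * (T - 1) = l * Q l"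
  proof -
    have "Q l * D2 l = \<beta> * (T - 1)" unfolding Q_def using d2 by simp
    thus ?thesis unfolding D2_def \<beta>_def by (simp add: algebra_simps)
  qed
  show ?thesis using lgt Ppos Qpos e1 e2 e3 by blast
qed

lemma ext_graph: "graph n (extremal_graph \<tau> n)"
  unfolding graph_def extremal_graph_def by auto

lemma ext_nbr:
  assumes t: "\<tau> \<ge> 2" and nt: "n \<ge> \<tau> + 1" and u: "u < n"
  shows "nbr n (extremal_graph \<tau> n) u = Kset n {0..<\<tau> - 1} (n - 1) u"
  using t nt u unfolding nbr_def Kset_def extremal_graph_def by auto

lemma subset_card_between:
  assumes "finite X" "Y \<subseteq> X" "card Y \<le> m" "m \<le> card X"
  shows "\<exists>Z. Y \<subseteq> Z \<and> Z \<subseteq> X \<and> card Z = m"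
proof -
  have fY: "finite Y" using assms(1,2) finite_subset by blast
  have "m - card Y \<le> card (X - Y)" using assms fY by (simp add: card_Diff_subset)
  then obtain W where W: "W \<subseteq> X - Y" "card W = m - card Y"
    using obtain_subset_with_card_n by metis
  have fW: "finite W" using W(1) assms(1) finite_subset by blast
  have "card (Y \<union> W) = card Y + card W"
    using W(1) fY fW by (intro card_Un_disjoint) auto
  thus ?thesis using W assms by (intro exI[of _ "Y \<union> W"]) auto
qed

lemma iso_from_shape:
  assumes A: "A \<subseteq> {0..<n}" and w: "w < n" "w \<notin> A" and cA: "card A = \<tau> - 1" and t: "\<tau> \<ge> 2"
    and nt: "n \<ge> \<tau> + 1"
    and sh: "\<And>u. u < n \<Longrightarrow> nbr n E u = Kset n A w u"
  shows "graph_iso n E (extremal_graph \<tau> n)"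
proof -
  have fA: "finite A" using A finite_subset by blast
  define B where "B = {0..<n} - A - {w}"
  have cB: "card B = n - \<tau>"
  proof -
    have "card ({0..<n} - A) = n - (\<tau> - 1)" using A cA fA by (simp add: card_Diff_subset)
    moreover have "w \<in> {0..<n} - A" using w by simp
    ultimately show ?thesis unfolding B_def using t by (simp add: card_Diff_singleton)
  qed
  obtain g1 where g1: "bij_betw g1 A {0..<\<tau> - 1}"
    using finite_same_card_bij[OF fA, of "{0..<\<tau> - 1}"] cA by auto
  have cI0: "card {\<tau> - 1..<n - 1} = (n - 1) - (\<tau> - 1)" by simp
  have cI: "card {\<tau> - 1..<n - 1} = n - \<tau>" using cI0 t nt by arith
  have fB: "finite B" unfolding B_def by simp
  have cBI: "card B = card {\<tau> - 1..<n - 1}" by (simp only: cB cI)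
  obtain g2 where g2: "bij_betw g2 B {\<tau> - 1..<n - 1}"
    using finite_same_card_bij[OF fB _ cBI] by auto
  define f where "f u = (if u \<in> A then g1 u else if u = w then n - 1 else g2 u)" for u
  have b1: "bij_betw f A {0..<\<tau> - 1}"
    using g1 by (rule bij_betw_cong[THEN iffD1, rotated]) (auto simp: f_def)
  have b2: "bij_betw f B {\<tau> - 1..<n - 1}"
    using g2 by (rule bij_betw_cong[THEN iffD1, rotated]) (auto simp: f_def B_def)
  have b3: "bij_betw f {w} {n - 1}" using w by (simp add: f_def bij_betw_def)
  have b23: "bij_betw f ({w} \<union> B) ({n - 1} \<union> {\<tau> - 1..<n - 1})"
    by (rule bij_betw_combine[OF b3 b2]) auto
  have b123: "bij_betw f (A \<union> ({w} \<union> B)) ({0..<\<tau> - 1} \<union> ({n - 1} \<union> {\<tau> - 1..<n - 1}))"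
    by (rule bij_betw_combine[OF b1 b23]) (use t nt in auto)
  have V1: "A \<union> ({w} \<union> B) = {0..<n}" using A w unfolding B_def by auto
  have V2: "{0..<\<tau> - 1} \<union> ({n - 1} \<union> {\<tau> - 1..<n - 1}) = {0..<n}" using t nt by auto
  have bij: "bij_betw f {0..<n} {0..<n}" using b123 unfolding V1 V2 .
  have fA1: "f i < \<tau> - 1 \<longleftrightarrow> i \<in> A" if "i < n" for i
  proof
    assume "i \<in> A" thus "f i < \<tau> - 1" using b1 by (auto simp: bij_betw_def)
  next
    assume fi: "f i < \<tau> - 1"
    show "i \<in> A"
    proof (rule ccontr)
      assume "i \<notin> A"
      hence "i \<in> {w} \<union> B" using that unfolding B_def by auto
      hence "f i \<in> {n - 1} \<union> {\<tau> - 1..<n - 1}" using b23 by (auto simp: bij_betw_def)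
      thus False using fi t nt by auto
    qed
  qed
  have fw: "f i < n - 1 \<longleftrightarrow> i \<noteq> w" if "i < n" for i
  proof
    assume "f i < n - 1"
    thus "i \<noteq> w" using w by (auto simp: f_def)
  next
    assume iw: "i \<noteq> w"
    hence "i \<in> A \<or> i \<in> B" using that unfolding B_def by auto
    thus "f i < n - 1"
    proof
      assume "i \<in> A"
      hence "f i \<in> {0..<\<tau> - 1}" by (rule bij_betw_apply[OF b1])
      thus ?thesis using t nt by auto
    next
      assume "i \<in> B"
      hence "f i \<in> {\<tau> - 1..<n - 1}" by (rule bij_betw_apply[OF b2])
      thus ?thesis by auto
    qed
  qed
  have fn: "f i < n" if "i < n" for i using bij that by (auto simp: bij_betw_def)
  have finj: "f i = f j \<longleftrightarrow> i = j" if "i < n" "j < n" for i j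
    using bij that by (auto simp: bij_betw_def inj_on_def)
  have "E i j \<longleftrightarrow> extremal_graph \<tau> n (f i) (f j)" if ij: "i < n" "j < n" for i j
  proof -
    have "E i j \<longleftrightarrow> j \<in> nbr n E i" using ij unfolding nbr_def by auto
    also have "\<dots> \<longleftrightarrow> j \<in> Kset n A w i" using sh[OF ij(1)] by simp
    also have "\<dots> \<longleftrightarrow> (i \<noteq> j \<and> (i \<in> A \<or> j \<in> A \<or> (i \<noteq> w \<and> j \<noteq> w)))"
      using ij w unfolding Kset_def by auto
    also have "\<dots> \<longleftrightarrow> extremal_graph \<tau> n (f i) (f j)"
      unfolding extremal_graph_def using fA1[OF ij(1)] fA1[OF ij(2)] fw[OF ij(1)] fw[OF ij(2)]
        fn[OF ij(1)] fn[OF ij(2)] finj[OF ij] by auto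
    finally show ?thesis .
  qed
  thus ?thesis unfolding graph_iso_def using bij by blast
qed

lemma ext_rho:
  assumes t: "\<tau> \<ge> 2" and nt: "n \<ge> \<tau> + 1" and a: "0 \<le> \<alpha>" "\<alpha> < 1"
  shows "\<exists>lam p q. lam > real n - 2 \<and> p > 0 \<and> q > 0 \<and>
     \<alpha> * (real n - 1) + (1 - \<alpha>) * ((real \<tau> - 2) + (real n - real \<tau>) * p + q) = lam \<and>
     \<alpha> * (real n - 2) * p + (1 - \<alpha>) * ((real \<tau> - 1) + (real n - real \<tau> - 1) * p) = lam * p \<and>
     \<alpha> * (real \<tau> - 1) * q + (1 - \<alpha>) * (real \<tau> - 1) = lam * q \<and>
     lam \<le> rho_alpha \<alpha> n (extremal_graph \<tau> n)"
proof -
  have T: "real \<tau> \<ge> 2" using t by simp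
  have N: "real n \<ge> real \<tau> + 1" using nt by simp
  obtain lam p q where L: "lam > real n - 2" "p > 0" "q > 0"
    and e1: "\<alpha> * (real n - 1) + (1 - \<alpha>) * ((real \<tau> - 2) + (real n - real \<tau>) * p + q) = lam"
    and e2: "\<alpha> * (real n - 2) * p + (1 - \<alpha>) * ((real \<tau> - 1) + (real n - real \<tau> - 1) * p) = lam * p"
    and e3: "\<alpha> * (real \<tau> - 1) * q + (1 - \<alpha>) * (real \<tau> - 1) = lam * q"
    using root_exists[OF T N a] by blast
  define A0 where "A0 = {0..<\<tau> - 1}"
  define w0 where "w0 = n - 1"
  have A0: "A0 \<subseteq> {0..<n}" using nt unfolding A0_def by auto
  have w0: "w0 < n" "w0 \<notin> A0" using nt t unfolding w0_def A0_def by auto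
  have cA0: "card A0 = \<tau> - 1" unfolding A0_def by simp
  have "eigenvalue (A_alpha \<alpha> n (extremal_graph \<tau> n)) lam"
    unfolding eig_Mf_iff
  proof (rule exI[of _ "xv A0 w0 p q"], intro conjI allI impI)
    show "\<exists>i<n. xv A0 w0 p q i \<noteq> 0"
      using t nt by (intro exI[of _ 0]) (auto simp: xv_def A0_def)
    fix i assume i: "i < n"
    have "(\<Sum>j\<in>{0..<n}. Mf \<alpha> n (extremal_graph \<tau> n) i j * xv A0 w0 p q j)
        = \<alpha> * real (card (Kset n A0 w0 i)) * xv A0 w0 p q i + (1 - \<alpha>) * (\<Sum>j\<in>Kset n A0 w0 i. xv A0 w0 p q j)"
      by (rule row_eq[OF ext_graph i]) (use ext_nbr[OF t nt i] in \<open>simp add: A0_def w0_def\<close>)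
    also have "\<dots> = lam * xv A0 w0 p q i"
      by (rule ext_rows[OF A0 w0 cA0 t nt e1 e2 e3 i])
    finally show "(\<Sum>j\<in>{0..<n}. Mf \<alpha> n (extremal_graph \<tau> n) i j * xv A0 w0 p q j) = lam * xv A0 w0 p q i" .
  qed
  moreover have n0: "n > 0" using nt by simp
  ultimately have "lam \<le> rho_alpha \<alpha> n (extremal_graph \<tau> n)"
    using rho_ge[OF ext_graph] by blast
  thus ?thesis using L e1 e2 e3 by blast
qed

lemma deg_case:
  assumes g: "graph n E" and c: "connected_graph n E" and t: "\<tau> \<ge> 2" and nt: "n \<ge> \<tau> + 1"
    and a: "0 \<le> \<alpha>" "\<alpha> < 1"
    and w: "w < n" and dw: "card (nbr n E w) \<le> \<tau> - 1"
    and L: "p > 0" "q > 0"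
    and e1: "\<alpha> * (real n - 1) + (1 - \<alpha>) * ((real \<tau> - 2) + (real n - real \<tau>) * p + q) = lam"
    and e2: "\<alpha> * (real n - 2) * p + (1 - \<alpha>) * ((real \<tau> - 1) + (real n - real \<tau> - 1) * p) = lam * p"
    and e3: "\<alpha> * (real \<tau> - 1) * q + (1 - \<alpha>) * (real \<tau> - 1) = lam * q"
  shows "rho_alpha \<alpha> n E < lam \<or> graph_iso n E (extremal_graph \<tau> n)"
proof -
  have "nbr n E w \<subseteq> {0..<n} - {w}" using g unfolding nbr_def graph_def by auto
  moreover have "\<tau> - 1 \<le> card ({0..<n} - {w})" using w nt by simp
  ultimately obtain A where A1: "nbr n E w \<subseteq> A" "A \<subseteq> {0..<n} - {w}" "card A = \<tau> - 1"
    using subset_card_between[of "{0..<n} - {w}" "nbr n E w" "\<tau> - 1"] dw by auto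
  have A: "A \<subseteq> {0..<n}" and wA: "w \<notin> A" using A1 by auto
  define x where "x = xv A w p q"
  have xpos: "x j > 0" for j using L unfolding x_def xv_def by auto
  have sub: "nbr n E u \<subseteq> Kset n A w u" if u: "u < n" for u
  proof -
    consider (a) "u \<in> A" | (w) "u = w" | (b) "u \<notin> A" "u \<noteq> w" by blast
    thus ?thesis
    proof cases
      case a thus ?thesis using g unfolding Kset_def nbr_def graph_def by auto
    next
      case w thus ?thesis using A1 wA unfolding Kset_def by auto
    next
      case b
      have "\<not> E u w"
      proof
        assume "E u w"
        hence "u \<in> nbr n E w" using g u unfolding nbr_def graph_def by auto
        thus False using A1 b by auto
      qed
      thus ?thesis using b g unfolding Kset_def nbr_def graph_def by auto
    qed
  qed
  have rowle: "(\<Sum>j\<in>{0..<n}. Mf \<alpha> n E u j * x j) \<le> lam * x u" if u: "u < n" for u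
  proof -
    have "(\<Sum>j\<in>{0..<n}. Mf \<alpha> n E u j * x j) \<le> \<alpha> * real (card (Kset n A w u)) * x u + (1 - \<alpha>) * (\<Sum>j\<in>Kset n A w u. x j)"
      by (rule row_bound[OF g u sub[OF u] Kset_sub[OF A]]) (use a xpos in \<open>auto intro: less_imp_le\<close>)
    also have "\<dots> = lam * x u" unfolding x_def
      by (rule ext_rows[OF A w wA A1(3) t nt e1 e2 e3 u])
    finally show ?thesis .
  qed
  show ?thesis
  proof (cases "\<forall>u<n. nbr n E u = Kset n A w u")
    case True
    hence "graph_iso n E (extremal_graph \<tau> n)"
      using iso_from_shape[OF A w wA A1(3) t nt] by blast
    thus ?thesis by simp
  next
    case False
    then obtain k where k: "k < n" "nbr n E k \<noteq> Kset n A w k" by blast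
    then obtain b where b: "b \<in> Kset n A w k" "b \<notin> nbr n E k" using sub[OF k(1)] by blast
    have "(\<Sum>j\<in>{0..<n}. Mf \<alpha> n E k j * x j) < \<alpha> * real (card (Kset n A w k)) * x k + (1 - \<alpha>) * (\<Sum>j\<in>Kset n A w k. x j)"
      by (rule row_strict[OF g k(1) sub[OF k(1)] Kset_sub[OF A] a _ b]) (use xpos in auto)
    also have "\<dots> = lam * x k" unfolding x_def
      by (rule ext_rows[OF A w wA A1(3) t nt e1 e2 e3 k(1)])
    finally have "(\<Sum>j\<in>{0..<n}. Mf \<alpha> n E k j * x j) < lam * x k" .
    hence "rho_alpha \<alpha> n E < lam"
      by (intro rho_less[OF g c _ a xpos rowle k(1)]) (use nt in auto)
    thus ?thesis by simp
  qed
qed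

lemma split_bound:
  assumes g: "graph n E" and S: "S \<subseteq> {0..<n}" and s1: "card S \<ge> 1"
    and a: "0 \<le> \<alpha>" "\<alpha> < 1"
    and C: "\<And>u. u \<in> {0..<n} - S \<Longrightarrow> C u \<subseteq> {0..<n} - S \<and> u \<in> C u \<and> nbr n E u \<subseteq> S \<union> C u
                \<and> card (C u) + k + 1 \<le> card ({0..<n} - S)"
    and k: "k \<ge> 1"
    and ineq: "real k * ((1 - \<alpha>) * real (card ({0..<n} - S)) - 1) \<ge> (1 - \<alpha>) * real (card S)"
  shows "rho_alpha \<alpha> n E \<le> real n - 2"
proof -
  define s where "s = card S"
  define T where "T = {0..<n} - S"
  define N where "N = card T"
  define \<beta> where "\<beta> = 1 - \<alpha>"
  have ineq': "real k * (\<beta> * real N - 1) \<ge> \<beta> * real s"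
    using ineq unfolding \<beta>_def s_def N_def T_def .
  have b: "\<beta> > 0" unfolding \<beta>_def using a by simp
  have fS: "finite S" using S finite_subset by blast
  have fT: "finite T" unfolding T_def by simp
  have "card S \<le> n" using card_mono[OF _ S] by simp
  hence nN: "n = N + s" unfolding N_def s_def T_def using S fS by (simp add: card_Diff_subset)
  hence rn: "real n = real N + real s" by simp
  have s1': "real s \<ge> 1" using s1 unfolding s_def by simp
  have bs: "\<beta> * real s > 0" using b s1' by simp
  define y0 where "y0 = \<beta> * s / (k + \<beta> * s)"
  have den: "real k + \<beta> * s > 0" using k bs by linarith
  have y0pos: "y0 > 0" unfolding y0_def using bs den by simp
  have y0eq: "y0 * (k + \<beta> * s) = \<beta> * s" unfolding y0_def using den by simp
  define x where "x u = (if u \<in> S then 1 else y0)" for u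
  have xpos: "x u > 0" for u unfolding x_def using y0pos by simp
  have n0: "n > 0" using rn s1' by linarith
  have rows: "(\<Sum>j\<in>{0..<n}. Mf \<alpha> n E u j * x j) \<le> (real n - 2) * x u" if u: "u < n" for u
  proof (cases "u \<in> S")
    case True
    have K: "nbr n E u \<subseteq> {0..<n} - {u}" using g unfolding nbr_def graph_def by auto
    have r0: "(\<Sum>j\<in>{0..<n}. Mf \<alpha> n E u j * x j) \<le> \<alpha> * real (card ({0..<n} - {u})) * x u + (1 - \<alpha>) * (\<Sum>j\<in>{0..<n} - {u}. x j)"
      by (rule row_bound[OF g u K]) (use a xpos in \<open>auto intro: less_imp_le\<close>)
    have c1: "real (card ({0..<n} - {u})) = real n - 1" using u by (simp add: of_nat_diff)
    have eqV: "{0..<n} - {u} = (S - {u}) \<union> T" using S True unfolding T_def by auto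
    have sp: "(\<Sum>j\<in>(S - {u}) \<union> T. x j) = (\<Sum>j\<in>S - {u}. x j) + (\<Sum>j\<in>T. x j)"
      by (rule sum.union_disjoint) (use fS fT in \<open>auto simp: T_def\<close>)
    have sS: "(\<Sum>j\<in>S - {u}. x j) = real s - 1"
    proof -
      have "(\<Sum>j\<in>S - {u}. x j) = (\<Sum>j\<in>S - {u}. 1)" by (rule sum.cong) (auto simp: x_def)
      also have "\<dots> = real (card (S - {u}))" by simp
      also have "card (S - {u}) = s - 1" unfolding s_def using True fS by simp
      finally show ?thesis using s1 unfolding s_def by (simp add: of_nat_diff)
    qed
    have sT: "(\<Sum>j\<in>T. x j) = real N * y0"
    proof -
      have "(\<Sum>j\<in>T. x j) = (\<Sum>j\<in>T. y0)" by (rule sum.cong) (auto simp: x_def T_def)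
      thus ?thesis unfolding N_def by simp
    qed
    have xu: "x u = 1" using True unfolding x_def by simp
    have r: "(\<Sum>j\<in>{0..<n}. Mf \<alpha> n E u j * x j) \<le> \<alpha> * (real n - 1) + \<beta> * ((real s - 1) + real N * y0)"
      using r0 unfolding c1 xu unfolding eqV sp sS sT \<beta>_def by simp
    have e: "(\<beta> * real N - 1) * (k + \<beta> * s) - \<beta> * (real N * y0) * (k + \<beta> * s)
             = real k * (\<beta> * real N - 1) - \<beta> * real s"
    proof -
      have "\<beta> * (real N * y0) * (k + \<beta> * s) = \<beta> * real N * (y0 * (k + \<beta> * s))" by (simp add: algebra_simps)
      also have "\<dots> = \<beta> * real N * (\<beta> * s)" unfolding y0eq ..
      finally have h: "\<beta> * (real N * y0) * (k + \<beta> * s) = \<beta> * real N * (\<beta> * s)" .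
      show ?thesis unfolding h by (simp add: algebra_simps)
    qed
    hence "(\<beta> * real N - 1) * (k + \<beta> * s) - \<beta> * (real N * y0) * (k + \<beta> * s) \<ge> 0" using ineq' by linarith
    hence "((\<beta> * real N - 1) - \<beta> * (real N * y0)) * (k + \<beta> * s) \<ge> 0" by (simp add: left_diff_distrib)
    hence "(\<beta> * real N - 1) - \<beta> * (real N * y0) \<ge> 0" using den by (simp add: zero_le_mult_iff)
    hence "\<alpha> * (real n - 1) + \<beta> * ((real s - 1) + real N * y0) \<le> real n - 2"
      using rn unfolding \<beta>_def by (simp add: algebra_simps)
    thus ?thesis using r xu by simp
  next
    case False
    hence uT: "u \<in> T" using u unfolding T_def by simp
    have Cu: "C u \<subseteq> T" "u \<in> C u" "nbr n E u \<subseteq> S \<union> C u" "card (C u) + k + 1 \<le> N"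
      using C[of u] uT unfolding T_def N_def by auto
    have fC: "finite (C u)" using Cu(1) fT finite_subset by blast
    have K: "nbr n E u \<subseteq> S \<union> (C u - {u})" using Cu(3) g unfolding nbr_def graph_def by auto
    have KV: "S \<union> (C u - {u}) \<subseteq> {0..<n}" using S Cu(1) unfolding T_def by auto
    have disj: "S \<inter> (C u - {u}) = {}" using Cu(1) unfolding T_def by auto
    define cu where "cu = card (C u)"
    have cu1: "cu \<ge> 1" using card_gt_0_iff[of "C u"] fC Cu(2) unfolding cu_def by auto
    have r0: "(\<Sum>j\<in>{0..<n}. Mf \<alpha> n E u j * x j) \<le> \<alpha> * real (card (S \<union> (C u - {u}))) * x u + (1 - \<alpha>) * (\<Sum>j\<in>S \<union> (C u - {u}). x j)"
      by (rule row_bound[OF g u K KV]) (use a xpos in \<open>auto intro: less_imp_le\<close>)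
    have cC: "card (C u - {u}) = cu - 1" unfolding cu_def using Cu(2) fC by simp
    have c1: "real (card (S \<union> (C u - {u}))) = real s + real cu - 1"
    proof -
      have "card (S \<union> (C u - {u})) = card S + card (C u - {u})"
        by (rule card_Un_disjoint) (use fS fC disj in auto)
      thus ?thesis unfolding cC s_def using cu1 by (simp add: of_nat_diff)
    qed
    have s2: "(\<Sum>j\<in>S \<union> (C u - {u}). x j) = real s + (real cu - 1) * y0"
    proof -
      have "(\<Sum>j\<in>S \<union> (C u - {u}). x j) = (\<Sum>j\<in>S. x j) + (\<Sum>j\<in>C u - {u}. x j)"
        by (rule sum.union_disjoint) (use fS fC disj in auto)
      also have "(\<Sum>j\<in>S. x j) = (\<Sum>j\<in>S. 1)" by (rule sum.cong) (auto simp: x_def)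
      also have "\<dots> = real s" unfolding s_def by simp
      also have "(\<Sum>j\<in>C u - {u}. x j) = (\<Sum>j\<in>C u - {u}. y0)"
        by (rule sum.cong) (use Cu(1) in \<open>auto simp: x_def T_def\<close>)
      also have "\<dots> = real (cu - 1) * y0" using cC by simp
      also have "real (cu - 1) = real cu - 1" using cu1 by (simp add: of_nat_diff)
      finally show ?thesis .
    qed
    have xu: "x u = y0" using False unfolding x_def by simp
    have r: "(\<Sum>j\<in>{0..<n}. Mf \<alpha> n E u j * x j) \<le> \<alpha> * (real s + real cu - 1) * y0 + \<beta> * (real s + (real cu - 1) * y0)"
      using r0 unfolding c1 s2 xu \<beta>_def by simp
    have kN: "real cu + real k + 1 \<le> real N" using Cu(4) unfolding cu_def by linarith
    have "(real n - 2) * y0 - (\<alpha> * (real s + real cu - 1) * y0 + \<beta> * (real s + (real cu - 1) * y0))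
        = y0 * (real N - real cu - 1 + \<beta> * s) - \<beta> * s"
      using rn unfolding \<beta>_def by (simp add: algebra_simps)
    moreover have "y0 * (real N - real cu - 1 + \<beta> * s) \<ge> y0 * (k + \<beta> * s)"
      using kN y0pos by (intro mult_left_mono) auto
    ultimately have "(\<alpha> * (real s + real cu - 1) * y0 + \<beta> * (real s + (real cu - 1) * y0)) \<le> (real n - 2) * y0"
      using y0eq by linarith
    thus ?thesis using r xu by simp
  qed
  show ?thesis
    by (rule rho_le[OF g n0 a(1) _ xpos rows]) (use a in auto)
qed

definition Rt :: "(nat \<Rightarrow> nat \<Rightarrow> bool) \<Rightarrow> nat set \<Rightarrow> nat \<Rightarrow> nat \<Rightarrow> bool" where
  "Rt E T = (\<lambda>x y. E x y \<and> x \<in> T \<and> y \<in> T)"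

definition cl :: "(nat \<Rightarrow> nat \<Rightarrow> bool) \<Rightarrow> nat set \<Rightarrow> nat \<Rightarrow> nat set" where
  "cl E T v = {w \<in> T. (Rt E T)\<^sup>*\<^sup>* v w}"

lemma comps_cl: "components E T = cl E T ` T"
  unfolding components_def cl_def Rt_def ..

lemma cl_self: "v \<in> T \<Longrightarrow> v \<in> cl E T v"
  unfolding cl_def by simp

lemma cl_sub: "cl E T v \<subseteq> T"
  unfolding cl_def by auto

lemma Rt_sym:
  assumes sym: "\<And>i j. E i j \<longleftrightarrow> E j i" and r: "(Rt E T)\<^sup>*\<^sup>* a b"
  shows "(Rt E T)\<^sup>*\<^sup>* b a"
  using r
proof (induction rule: rtranclp_induct)
  case base thus ?case by simp
next
  case (step y z)
  have "Rt E T z y" using step(2) sym unfolding Rt_def by auto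
  thus ?case using step(3) by (rule converse_rtranclp_into_rtranclp)
qed

lemma cl_eq:
  assumes sym: "\<And>i j. E i j \<longleftrightarrow> E j i" and w: "w \<in> cl E T v"
  shows "cl E T w = cl E T v"
proof -
  have vw: "(Rt E T)\<^sup>*\<^sup>* v w" using w unfolding cl_def by simp
  have wv: "(Rt E T)\<^sup>*\<^sup>* w v" using Rt_sym[OF sym vw] .
  show ?thesis
  proof
    show "cl E T w \<subseteq> cl E T v" unfolding cl_def using vw by (auto intro: rtranclp_trans)
    show "cl E T v \<subseteq> cl E T w" unfolding cl_def using wv by (auto intro: rtranclp_trans)
  qed
qed

lemma cl_edge:
  assumes "u \<in> T" "w \<in> T" "E u w"
  shows "w \<in> cl E T u"
proof -
  have "Rt E T u w" using assms unfolding Rt_def by simp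
  thus ?thesis unfolding cl_def using assms(2) by auto
qed

lemma card_others:
  assumes sym: "\<And>i j. E i j \<longleftrightarrow> E j i" and fT: "finite T" and u: "u \<in> T"
  shows "card (components E T) - 1 \<le> card (T - cl E T u)"
proof -
  let ?C = "components E T - {cl E T u}"
  have inC: "cl E T u \<in> components E T" unfolding comps_cl using u by simp
  have fC: "finite (components E T)" unfolding comps_cl using fT by simp
  have cC: "card ?C = card (components E T) - 1" using inC fC by simp
  define r where "r C = (SOME x. x \<in> T \<and> C = cl E T x)" for C
  have r: "r C \<in> T \<and> C = cl E T (r C)" if "C \<in> components E T" for C
  proof -
    have "\<exists>x. x \<in> T \<and> C = cl E T x" using that unfolding comps_cl by auto
    thus ?thesis unfolding r_def by (rule someI_ex)
  qed
  have "inj_on r ?C"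
  proof (rule inj_onI)
    fix C D assume "C \<in> ?C" "D \<in> ?C" "r C = r D"
    hence "C \<in> components E T" "D \<in> components E T" "r C = r D" by auto
    hence "C = cl E T (r C)" "D = cl E T (r D)" using r[THEN conjunct2] by blast+
    thus "C = D" using \<open>r C = r D\<close> by metis
  qed
  moreover have "r ` ?C \<subseteq> T - cl E T u"
  proof
    fix y assume "y \<in> r ` ?C"
    then obtain C where C: "C \<in> ?C" "y = r C" by blast
    have Cc: "C \<in> components E T" using C(1) by blast
    have y: "y \<in> T" "C = cl E T y" unfolding C(2)
      using r[OF Cc, THEN conjunct1] r[OF Cc, THEN conjunct2] by -
    have "y \<notin> cl E T u"
    proof
      assume "y \<in> cl E T u"
      hence "cl E T y = cl E T u" by (rule cl_eq[OF sym])
      with y(2) have "C = cl E T u" by (rule trans)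
      thus False using C(1) by blast
    qed
    thus "y \<in> T - cl E T u" using y by simp
  qed
  moreover have "finite (T - cl E T u)" using fT by simp
  ultimately have "card ?C \<le> card (T - cl E T u)" by (rule card_inj_on_le)
  thus ?thesis using cC by simp
qed

theorem theorem1p2:
  fixes n \<tau> :: nat and E :: "nat \<Rightarrow> nat \<Rightarrow> bool" and \<alpha> :: real
  assumes "graph n E" and "connected_graph n E"
    and "\<tau> \<ge> 2"
    and "1/2 \<le> \<alpha>" and "\<alpha> < 3/4"
    and "real n \<ge> 4 * real \<tau>^2 + 5 * real \<tau> + 1"
    and "real n \<ge> (8 * real \<tau> * (1 - \<alpha>) - 2 * \<alpha> + 1) / (3 - 4 * \<alpha>)"
    and "rho_alpha \<alpha> n E \<ge> rho_alpha \<alpha> n (extremal_graph \<tau> n)"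
  shows "tough (real \<tau>) n E \<or> graph_iso n E (extremal_graph \<tau> n)"
proof -
  have g: "graph n E" and con: "connected_graph n E" and t: "\<tau> \<ge> 2" using assms by auto
  have sym: "\<And>i j. E i j \<longleftrightarrow> E j i" using g unfolding graph_def by blast
  have a: "0 \<le> \<alpha>" "\<alpha> < 1" using assms(4,5) by auto
  have bq: "1 - \<alpha> > 1/4" "1 - \<alpha> \<le> 1/2" using assms(4,5) by auto
  have nbr_real: "real n \<ge> 4 * (real \<tau> * real \<tau>) + 5 * real \<tau> + 1"
    using assms(6) by (simp add: power2_eq_square)
  have tr: "real \<tau> \<ge> 2" using t by simp
  have nt: "n \<ge> \<tau> + 1"
  proof -
    have "real \<tau> * real \<tau> \<ge> 0" by simp
    hence "real n \<ge> real \<tau> + 1" using nbr_real tr by linarith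
    thus ?thesis by linarith
  qed
  obtain lam p q where L: "lam > real n - 2" "p > 0" "q > 0"
    and e1: "\<alpha> * (real n - 1) + (1 - \<alpha>) * ((real \<tau> - 2) + (real n - real \<tau>) * p + q) = lam"
    and e2: "\<alpha> * (real n - 2) * p + (1 - \<alpha>) * ((real \<tau> - 1) + (real n - real \<tau> - 1) * p) = lam * p"
    and e3: "\<alpha> * (real \<tau> - 1) * q + (1 - \<alpha>) * (real \<tau> - 1) = lam * q"
    and lr: "lam \<le> rho_alpha \<alpha> n (extremal_graph \<tau> n)"
    using ext_rho[OF t nt a] by blast
  have rG: "lam \<le> rho_alpha \<alpha> n E" using lr assms(8) by linarith
  show ?thesis
  proof (rule disjCI)
    assume niso: "\<not> graph_iso n E (extremal_graph \<tau> n)"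
    have degs: "\<tau> \<le> card (nbr n E w)" if w: "w < n" for w
    proof (rule ccontr)
      assume "\<not> \<tau> \<le> card (nbr n E w)"
      hence dw: "card (nbr n E w) \<le> \<tau> - 1" by simp
      have "rho_alpha \<alpha> n E < lam \<or> graph_iso n E (extremal_graph \<tau> n)"
        by (rule deg_case[OF g con t nt a w dw L(2,3) e1 e2 e3])
      thus False using rG niso by linarith
    qed
    show "tough (real \<tau>) n E"
      unfolding tough_def
    proof (intro allI impI)
      fix S assume H: "S \<subset> {0..<n} \<and> 1 < num_components E ({0..<n} - S)"
      define T where "T = {0..<n} - S"
      define cc where "cc = num_components E T"
      define s where "s = card S"
      define N where "N = card T"
      have S: "S \<subseteq> {0..<n}" using H by auto
      have fS: "finite S" using S finite_subset by blast
      have fT: "finite T" unfolding T_def by simp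
      have cc2: "cc \<ge> 2" using H unfolding cc_def T_def by simp
      have ccard: "cc = card (components E T)" unfolding cc_def num_components_def ..
      have "card S \<le> n" using card_mono[OF _ S] by simp
      hence nN: "n = N + s" unfolding N_def s_def T_def using S fS by (simp add: card_Diff_subset)
      have s1: "s \<ge> 1"
      proof (rule ccontr)
        assume "\<not> s \<ge> 1"
        hence "card S = 0" unfolding s_def by simp
        hence "S = {}" using fS by simp
        hence "cc = 1" using con unfolding cc_def T_def connected_graph_def by simp
        thus False using cc2 by simp
      qed
      have Tne: "T \<noteq> {}"
      proof
        assume "T = {}"
        hence "cc = 0" unfolding ccard comps_cl by simp
        thus False using cc2 by simp
      qed
      then obtain u0 where u0: "u0 \<in> T" by blast
      have others: "cc - 1 \<le> card (T - cl E T u)" if "u \<in> T" for u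
        unfolding ccard by (rule card_others[OF sym fT that])
      have cardT: "N = card (cl E T u) + card (T - cl E T u)" if "u \<in> T" for u
      proof -
        have sub: "cl E T u \<subseteq> T" by (rule cl_sub)
        have fin: "finite (cl E T u)" by (rule finite_subset[OF sub fT])
        have "card (T - cl E T u) = card T - card (cl E T u)" by (rule card_Diff_subset[OF fin sub])
        moreover have "card (cl E T u) \<le> card T" by (rule card_mono[OF fT sub])
        ultimately show ?thesis unfolding N_def by arith
      qed
      have nbrC: "nbr n E u \<subseteq> S \<union> cl E T u" if "u \<in> T" for u
      proof
        fix j assume j: "j \<in> nbr n E u"
        show "j \<in> S \<union> cl E T u"
        proof (cases "j \<in> S")
          case False
          hence "j \<in> T" using j unfolding nbr_def T_def by auto
          thus ?thesis using cl_edge[OF that _] j unfolding nbr_def by auto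
        qed simp
      qed
      show "real \<tau> * (real (num_components E ({0..<n} - S)) - 1) \<le> real (card S)"
      proof (rule ccontr)
        assume "\<not> ?thesis"
        hence lt: "real s < real \<tau> * (real cc - 1)" unfolding s_def cc_def T_def by simp
        have cc1: "real (cc - 1) = real cc - 1" using cc2 by (simp add: of_nat_diff)
        have "real s < real \<tau> * real (cc - 1)" unfolding cc1 by (rule lt)
        hence "real s < real (\<tau> * (cc - 1))" by (simp only: of_nat_mult)
        hence "s < \<tau> * (cc - 1)" by (simp only: of_nat_less_iff)
        hence slt: "s + 1 \<le> \<tau> * (cc - 1)" by simp
        define k where "k = (if cc = 2 then 1 else cc - 2)"
        have k1: "k \<ge> 1" unfolding k_def using cc2 by auto
        have Cp: "cl E T u \<subseteq> T \<and> u \<in> cl E T u \<and> nbr n E u \<subseteq> S \<union> cl E T u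
                \<and> card (cl E T u) + k + 1 \<le> card T" if u: "u \<in> T" for u
        proof (intro conjI)
          show "cl E T u \<subseteq> T" by (rule cl_sub)
          show "u \<in> cl E T u" using u by (rule cl_self)
          show "nbr n E u \<subseteq> S \<union> cl E T u" using u by (rule nbrC)
          show "card (cl E T u) + k + 1 \<le> card T"
          proof (cases "cc = 2")
            case False
            thus ?thesis using others[OF u] cardT[OF u] cc2 unfolding k_def N_def by auto
          next
            case True
            have "card (T - cl E T u) \<ge> 2"
            proof (rule ccontr)
              assume "\<not> ?thesis"
              moreover have "card (T - cl E T u) \<ge> 1" using others[OF u] True by simp
              ultimately have c1: "card (T - cl E T u) = 1" by simp
              obtain w where w: "T - cl E T u = {w}" using card_1_singletonE[OF c1] by blast
              have wT: "w \<in> T" "w \<notin> cl E T u" using w by auto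
              have clw: "cl E T w \<subseteq> {w}"
              proof
                fix x assume x: "x \<in> cl E T w"
                have xT: "x \<in> T" using x cl_sub by blast
                have "x \<notin> cl E T u"
                proof
                  assume "x \<in> cl E T u"
                  hence "cl E T x = cl E T u" by (rule cl_eq[OF sym])
                  moreover have "cl E T x = cl E T w" using x by (rule cl_eq[OF sym])
                  ultimately have "w \<in> cl E T u" using cl_self[OF wT(1), of E] by simp
                  thus False using wT by simp
                qed
                thus "x \<in> {w}" using xT w by blast
              qed
              have "nbr n E w \<subseteq> S"
              proof
                fix j assume j: "j \<in> nbr n E w"
                show "j \<in> S"
                proof (rule ccontr)
                  assume "j \<notin> S"
                  hence "j \<in> T" using j unfolding nbr_def T_def by auto
                  hence "j \<in> cl E T w" using cl_edge[OF wT(1)] j unfolding nbr_def by auto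
                  hence "j = w" using clw by auto
                  thus False using j g unfolding nbr_def graph_def by auto
                qed
              qed
              hence "card (nbr n E w) \<le> s" unfolding s_def using fS by (rule card_mono[rotated])
              moreover have "s < \<tau>" using slt True by simp
              moreover have "w < n" using wT unfolding T_def by simp
              ultimately show False using degs[of w] by linarith
            qed
            thus ?thesis using cardT[OF u] True unfolding k_def N_def by simp
          qed
        qed
        have ineq: "real k * ((1 - \<alpha>) * real N - 1) \<ge> (1 - \<alpha>) * real s"
        proof (cases "cc = 2")
          case True
          have "s < \<tau>" using slt True by simp
          hence "real s \<le> real \<tau> - 1" by linarith
          moreover have "real n = real N + real s" using nN by simp
          moreover have "real \<tau> * real \<tau> \<ge> 0" by simp
          ultimately have NS: "real N - real s \<ge> 4" using nbr_real tr by linarith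
          have "(1 - \<alpha>) * (real N - real s) \<ge> (1 - \<alpha>) * 4"
            using NS bq by (intro mult_left_mono) auto
          moreover have "(1 - \<alpha>) * (real N - real s) = (1 - \<alpha>) * real N - (1 - \<alpha>) * real s"
            by (simp add: right_diff_distrib)
          moreover have "(1 - \<alpha>) * 4 > 1" using bq by (simp add: algebra_simps)
          ultimately have "(1 - \<alpha>) * real N - 1 \<ge> (1 - \<alpha>) * real s"
            by linarith
          thus ?thesis using True unfolding k_def by simp
        next
          case False
          hence cc3: "cc \<ge> 3" using cc2 by simp
          have rk: "real k = real cc - 2" unfolding k_def using False cc3 by (simp add: of_nat_diff)
          have fcl0: "finite (cl E T u0)" by (rule finite_subset[OF cl_sub fT])
          have "cl E T u0 \<noteq> {}" using cl_self[OF u0, of E] by blast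
          hence "card (cl E T u0) \<ge> 1" using fcl0 by (simp add: Suc_le_eq card_gt_0_iff)
          hence NC: "N \<ge> cc" using others[OF u0] cardT[OF u0] cc2 by arith
          have sr: "real s + 1 \<le> real \<tau> * (real cc - 1)"
          proof -
            have "real (s + 1) \<le> real (\<tau> * (cc - 1))" using slt by linarith
            thus ?thesis using cc2 by (simp add: of_nat_diff)
          qed
          have rn: "real n = real N + real s" using nN by simp
          have rNC: "real N \<ge> real cc" using NC by simp
          have "real \<tau> * (real cc - 1) \<le> real \<tau> * (real N - 1)"
            using rNC by (intro mult_left_mono) auto
          hence "real s + 1 \<le> real \<tau> * (real N - 1)" using sr by linarith
          moreover have "real \<tau> * (real N - 1) = real \<tau> * real N - real \<tau>" by (simp add: right_diff_distrib)
          ultimately have h: "real \<tau> * real N + real N \<ge> 4 * (real \<tau> * real \<tau>) + 6 * real \<tau> + 2"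
            using rn nbr_real by linarith
          have "(real \<tau> + 1) * (real N - (4 * real \<tau> + 2)) = real \<tau> * real N + real N - (4 * (real \<tau> * real \<tau>) + 6 * real \<tau> + 2)"
            by (simp add: algebra_simps)
          hence "(real \<tau> + 1) * (real N - (4 * real \<tau> + 2)) \<ge> 0" using h by linarith
          hence N4: "real N - (4 * real \<tau> + 2) \<ge> 0" using tr by (simp add: zero_le_mult_iff)
          define \<beta> where "\<beta> = 1 - \<alpha>"
          have bp: "\<beta> > 1/4" using bq unfolding \<beta>_def by simp
          have h1: "\<beta> * (real N - (4 * real \<tau> + 2)) \<ge> 0" using N4 bp by simp
          have h2: "\<beta> * real \<tau> \<ge> (1/4) * real \<tau>" using bp tr by (intro mult_right_mono) auto
          have "\<beta> * (real N - (4 * real \<tau> + 2)) = \<beta> * real N - 4 * (\<beta> * real \<tau>) - 2 * \<beta>"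
            by (simp add: algebra_simps)
          hence X: "\<beta> * real N - 1 \<ge> 2 * (\<beta> * real \<tau>)"
            using h1 h2 bp tr by linarith
          have kpos: "real k \<ge> 1" using k1 by simp
          have "real k * (\<beta> * real N - 1) \<ge> real k * (2 * (\<beta> * real \<tau>))"
            using X kpos by (intro mult_left_mono) auto
          moreover have "real k * (2 * (\<beta> * real \<tau>)) \<ge> (\<beta> * real \<tau>) * (real cc - 1)"
          proof -
            have "real k * 2 \<ge> real cc - 1" using rk cc3 by simp
            moreover have "\<beta> * real \<tau> \<ge> 0" using bp tr by simp
            ultimately have "(\<beta> * real \<tau>) * (real k * 2) \<ge> (\<beta> * real \<tau>) * (real cc - 1)"
              by (intro mult_left_mono) auto
            thus ?thesis by (simp add: mult_ac)
          qed
          moreover have "(\<beta> * real \<tau>) * (real cc - 1) \<ge> \<beta> * real s"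
          proof -
            have "\<beta> * (real \<tau> * (real cc - 1)) \<ge> \<beta> * real s"
              using sr bp by (intro mult_left_mono) auto
            thus ?thesis by (simp add: mult_ac)
          qed
          ultimately show ?thesis unfolding \<beta>_def by linarith
        qed
        have "rho_alpha \<alpha> n E \<le> real n - 2"
        proof (rule split_bound[OF g S _ a, of "cl E T" k])
          show "1 \<le> card S" using s1 unfolding s_def .
          show "\<And>u. u \<in> {0..<n} - S \<Longrightarrow> cl E T u \<subseteq> {0..<n} - S \<and> u \<in> cl E T u \<and>
              nbr n E u \<subseteq> S \<union> cl E T u \<and> card (cl E T u) + k + 1 \<le> card ({0..<n} - S)"
            using Cp unfolding T_def by blast
          show "1 \<le> k" by (rule k1)
          show "(1 - \<alpha>) * real (card S) \<le> real k * ((1 - \<alpha>) * real (card ({0..<n} - S)) - 1)"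
            using ineq unfolding s_def N_def T_def .
        qed
        thus False using rG L(1) by linarith
      qed
    qed
  qed
qed

end
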